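(* There is an absolute constant $K$ such that the following holds. Let $0\le\xi\le1/2$ and let $\rho\in\mathbb{R}^{n\times n}$ be psd with $\operatorname{tr}(\rho)=1$, $\rho_{ii}>0$ for all $i$, and $\sum_i|\rho_{ii}-1/n|\le\xi^3$. Let $\sigma\in\mathbb{R}^{n\times n}$ have entries $\sigma_{ij}=\frac{\rho_{ij}}{n\sqrt{\rho_{ii}\rho_{jj}}}$. Then $\|\rho-\sigma\|_{\mathrm{tr}}\le K\xi$.
   Context: $\|A\|_{\mathrm{tr}}$ is the trace norm. The paper writes the conclusion as $\|\rho-\sigma\|_{\mathrm{tr}}=\mathcal{O}(\xi)$, with the implied constant independent of $n$ and $\rho$. *)

theory Defs
  imports "Jordan_Normal_Form.Char_Poly"
begin

definition mat_trace :: "real mat \<Rightarrow> real" where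
  "mat_trace A = (\<Sum>i<dim_row A. A $$ (i, i))"

definition psd_mat :: "nat \<Rightarrow> real mat \<Rightarrow> bool" where
  "psd_mat n A \<longleftrightarrow> A \<in> carrier_mat n n \<and> transpose_mat A = A \<and>
     (\<forall>x \<in> carrier_vec n. 0 \<le> x \<bullet> (A *\<^sub>v x))"

text \<open>Trace norm = sum of singular values, i.e. of the square roots of the eigenvalues
  (with multiplicity) of A^T A.\<close>
definition trace_norm :: "real mat \<Rightarrow> real" where
  "trace_norm A = sum_mset (image_mset sqrt (proots (char_poly (transpose_mat A * A))))"

end

theory Submission
  imports Defs
begin



lemma sym_eigen:
  fixes A :: "real mat"
  assumes A: "A \<in> carrier_mat m m" and sym: "transpose_mat A = A" and m: "0 < m"
  shows "\<exists>e v. v \<in> carrier_vec m \<and> v \<noteq> 0\<^sub>v m \<and> A *\<^sub>v v = e \<cdot>\<^sub>v v"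
proof -
  define Ac where "Ac = map_mat complex_of_real A"
  have Ac: "Ac \<in> carrier_mat m m" using A by (simp add: Ac_def)
  obtain as where cp: "char_poly Ac = (\<Prod>a\<leftarrow>as. [:-a,1:])" and len: "length as = m"
    using char_poly_factorized[OF Ac] by auto
  define l where "l = hd as"
  have "l \<in> set as" using len m by (cases as) (auto simp: l_def)
  then have "poly (char_poly Ac) l = 0" unfolding cp
    by (auto simp: poly_prod_list prod_list_zero_iff)
  then have "eigenvalue Ac l" using eigenvalue_root_char_poly[OF Ac] by simp
  then obtain v where ev: "eigenvector Ac v l" by (auto simp: eigenvalue_def)
  hence v: "v \<in> carrier_vec m" "v \<noteq> 0\<^sub>v m" "Ac *\<^sub>v v = l \<cdot>\<^sub>v v" using Ac by (auto simp: eigenvector_def)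
  have rowi: "(\<Sum>j<m. of_real (A$$(i,j)) * v$j) = l * v$i" if i: "i < m" for i
  proof -
    have "(Ac *\<^sub>v v) $ i = l * v$i" using v(3) i v(1) by simp
    moreover have "(Ac *\<^sub>v v) $ i = (\<Sum>j<m. of_real (A$$(i,j)) * v$j)"
      using i A v(1) by (simp add: Ac_def scalar_prod_def lessThan_atLeast0)
    ultimately show ?thesis by simp
  qed
  define S where "S = (\<Sum>i<m. \<Sum>j<m. of_real (A$$(i,j)) * v$j * cnj (v$i))"
  define N where "N = (\<Sum>i<m. v$i * cnj (v$i))"
  have SN: "S = l * N"
  proof -
    have "S = (\<Sum>i<m. (\<Sum>j<m. of_real (A$$(i,j)) * v$j) * cnj (v$i))"
      unfolding S_def by (simp add: sum_distrib_right)
    also have "\<dots> = (\<Sum>i<m. l * v$i * cnj (v$i))" using rowi by simp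
    finally show ?thesis by (simp add: N_def sum_distrib_left mult.assoc)
  qed
  have Aij: "A$$(i,j) = A$$(j,i)" if "i<m" "j<m" for i j
    using sym that A by (metis carrier_matD(1) carrier_matD(2) index_transpose_mat(1))
  have cS: "cnj S = S"
  proof -
    have "cnj S = (\<Sum>i<m. \<Sum>j<m. of_real (A$$(i,j)) * cnj (v$j) * v$i)"
      unfolding S_def by simp
    also have "\<dots> = (\<Sum>j<m. \<Sum>i<m. of_real (A$$(i,j)) * cnj (v$j) * v$i)"
      by (rule sum.swap)
    also have "\<dots> = S" unfolding S_def
      by (intro sum.cong refl) (simp add: Aij mult.commute mult.left_commute)
    finally show ?thesis .
  qed
  have Nr: "N = of_real (\<Sum>i<m. (cmod (v$i))^2)"
    unfolding N_def of_real_sum by (intro sum.cong refl) (metis complex_norm_square of_real_power)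
  obtain i where i: "i < m" "v$i \<noteq> 0" using v(1,2) by (metis eq_vecI carrier_vecD index_zero_vec)
  have "0 < (\<Sum>i<m. (cmod (v$i))^2)"
    by (rule sum_pos2[of _ i]) (use i in auto)
  hence N0: "N \<noteq> 0" unfolding Nr by (metis less_irrefl of_real_eq_0_iff)
  have "cnj l * N = l * N" using cS SN Nr by (metis complex_cnj_complex_of_real complex_cnj_mult)
  hence cl: "cnj l = l" using N0 by simp
  define e where "e = Re l"
  have le: "l = of_real e" using cl unfolding e_def by (metis Reals_cnj_iff of_real_Re)
  have "of_real (poly (char_poly A) e) = poly (char_poly Ac) l"
    unfolding le Ac_def of_real_hom.char_poly_hom[OF A] by (simp add: of_real_hom.poly_map_poly)
  with \<open>poly (char_poly Ac) l = 0\<close> have "poly (char_poly A) e = 0" by simp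
  hence "eigenvalue A e" using eigenvalue_root_char_poly[OF A] by simp
  then obtain w where "eigenvector A w e" by (auto simp: eigenvalue_def)
  thus ?thesis using A unfolding eigenvector_def by auto
qed


lemma mat_unit_entry:
  fixes X :: "'a::comm_ring_1 mat"
  assumes "X \<in> carrier_mat n n" "i < n" "j < n"
  shows "X $$ (i,j) = (X *\<^sub>v unit_vec n j) $ i"
  using assms by simp

definition hhu :: "nat \<Rightarrow> real vec \<Rightarrow> real mat" where
  "hhu n u = 1\<^sub>m n - (2 / (u \<bullet> u)) \<cdot>\<^sub>m mat n n (\<lambda>(i,j). u$i * u$j)"

lemma hhu_carrier[simp]: "hhu n u \<in> carrier_mat n n"
  unfolding hhu_def carrier_mat_def by simp

lemma hhu_dim[simp]: "dim_row (hhu n u) = n" "dim_col (hhu n u) = n"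
  unfolding hhu_def by simp_all

lemma hhu_vec:
  assumes u: "u \<in> carrier_vec n" and x: "x \<in> carrier_vec n"
  shows "hhu n u *\<^sub>v x = x - ((2/(u \<bullet> u)) * (u \<bullet> x)) \<cdot>\<^sub>v u"
proof (rule eq_vecI)
  fix i assume i: "i < dim_vec (x - ((2/(u \<bullet> u)) * (u \<bullet> x)) \<cdot>\<^sub>v u)"
  hence i: "i < n" using x u by simp
  have "(hhu n u *\<^sub>v x) $ i = (\<Sum>j<n. ((if i = j then 1 else 0) - (2/(u \<bullet> u)) * (u$i * u$j)) * x$j)"
    using i u x by (simp add: hhu_def scalar_prod_def lessThan_atLeast0)
  also have "\<dots> = (\<Sum>j<n. (if i = j then x$j else 0)) - (2/(u \<bullet> u)) * u$i * (\<Sum>j<n. u$j * x$j)"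
  proof -
    have "(\<Sum>j<n. ((if i = j then 1 else 0) - (2/(u \<bullet> u)) * (u$i * u$j)) * x$j)
       = (\<Sum>j<n. (if i = j then x$j else 0) - ((2/(u \<bullet> u)) * u$i) * (u$j * x$j))"
      by (intro sum.cong refl) (auto simp: algebra_simps)
    also have "\<dots> = (\<Sum>j<n. (if i = j then x$j else 0)) - ((2/(u \<bullet> u)) * u$i) * (\<Sum>j<n. u$j * x$j)"
      by (simp add: sum_subtractf sum_distrib_left)
    finally show ?thesis by simp
  qed
  also have "\<dots> = x$i - (2/(u \<bullet> u)) * u$i * (u \<bullet> x)"
    using i x by (simp add: scalar_prod_def lessThan_atLeast0)
  finally show "(hhu n u *\<^sub>v x) $ i = (x - ((2/(u \<bullet> u)) * (u \<bullet> x)) \<cdot>\<^sub>v u) $ i"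
    using i u x by simp
qed (use x u in auto)

lemma hhu_invol:
  assumes u: "u \<in> carrier_vec n" and x: "x \<in> carrier_vec n"
  shows "hhu n u *\<^sub>v (hhu n u *\<^sub>v x) = x"
proof (cases "u \<bullet> u = 0")
  case True
  have z: "x - 0 \<cdot>\<^sub>v u = x" by (rule eq_vecI) (use u x in auto)
  thus ?thesis using hhu_vec[OF u x] hhu_vec[OF u, of x] x True by simp
next
  case False
  define c where "c = 2/(u \<bullet> u)"
  define a where "a = u \<bullet> x"
  have hx: "hhu n u *\<^sub>v x = x - (c * a) \<cdot>\<^sub>v u" using hhu_vec[OF u x] by (simp add: c_def a_def)
  have hxc: "x - (c * a) \<cdot>\<^sub>v u \<in> carrier_vec n" using u x by simp
  have "u \<bullet> (x - (c * a) \<cdot>\<^sub>v u) = a - c * a * (u \<bullet> u)"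
    using scalar_prod_minus_distrib[OF u x, of "(c * a) \<cdot>\<^sub>v u"] u x
    by (simp add: a_def)
  also have "\<dots> = - a" using False by (simp add: c_def)
  finally have ua: "u \<bullet> (x - (c * a) \<cdot>\<^sub>v u) = - a" .
  have "hhu n u *\<^sub>v (hhu n u *\<^sub>v x) = hhu n u *\<^sub>v (x - (c * a) \<cdot>\<^sub>v u)" using hx by simp
  also have "\<dots> = (x - (c * a) \<cdot>\<^sub>v u) - ((2/(u \<bullet> u)) * (u \<bullet> (x - (c * a) \<cdot>\<^sub>v u))) \<cdot>\<^sub>v u"
    by (rule hhu_vec[OF u hxc])
  also have "\<dots> = (x - (c * a) \<cdot>\<^sub>v u) - (c * (-a)) \<cdot>\<^sub>v u" by (simp only: c_def[symmetric] ua)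
  also have "\<dots> = x"
    by (rule eq_vecI) (use u x in \<open>auto simp: algebra_simps\<close>)
  finally show ?thesis .
qed

lemma hhu_sym: "transpose_mat (hhu n u) = hhu n u"
  unfolding hhu_def by (rule eq_matI) auto

lemma hhu_sq:
  assumes u: "u \<in> carrier_vec n"
  shows "hhu n u * hhu n u = 1\<^sub>m n"
proof (rule eq_matI)
  fix i j assume "i < dim_row (1\<^sub>m n :: real mat)" "j < dim_col (1\<^sub>m n :: real mat)"
  hence ij: "i < n" "j < n" by auto
  have "(hhu n u * hhu n u) $$ (i,j) = ((hhu n u * hhu n u) *\<^sub>v unit_vec n j) $ i"
    using ij by (intro mat_unit_entry) auto
  also have "\<dots> = (hhu n u *\<^sub>v (hhu n u *\<^sub>v unit_vec n j)) $ i"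
    by (subst assoc_mult_mat_vec[of _ n n _ n]) auto
  also have "\<dots> = unit_vec n j $ i" using hhu_invol[OF u, of "unit_vec n j"] by simp
  finally show "(hhu n u * hhu n u) $$ (i,j) = 1\<^sub>m n $$ (i,j)" using ij by simp
qed auto

lemma real_sq_eq_0_vec:
  assumes u: "(u :: real vec) \<in> carrier_vec n" and "u \<bullet> u = 0"
  shows "u = 0\<^sub>v n"
  using conjugate_square_eq_0_vec[OF u] assms by (simp add: scalar_prod_def)

lemma hh_unit_other:
  assumes w: "w \<in> carrier_vec n" and j: "j < n" "j \<noteq> k" and wj: "w $ j = 0"
  shows "hhu n (w - unit_vec n k) *\<^sub>v unit_vec n j = unit_vec n j"
proof -
  have u: "w - unit_vec n k \<in> carrier_vec n" using w by simp
  have "(w - unit_vec n k) \<bullet> unit_vec n j = 0" using j wj w by (subst scalar_prod_right_unit[OF j(1)]) (auto simp: unit_vec_def)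
  hence "hhu n (w - unit_vec n k) *\<^sub>v unit_vec n j = unit_vec n j - 0 \<cdot>\<^sub>v (w - unit_vec n k)"
    using hhu_vec[OF u unit_vec_carrier[of n j]] by simp
  also have "\<dots> = unit_vec n j" by (rule eq_vecI) (use w in auto)
  finally show ?thesis .
qed

lemma hh_unit_k:
  assumes w: "w \<in> carrier_vec n" and k: "k < n" and ww: "w \<bullet> w = 1"
  shows "hhu n (w - unit_vec n k) *\<^sub>v unit_vec n k = w"
proof -
  define u where "u = w - unit_vec n k"
  have u: "u \<in> carrier_vec n" using w by (simp add: u_def)
  have ue: "u \<bullet> unit_vec n k = w $ k - 1" using k w by (simp add: u_def)
  have "u \<bullet> u = u \<bullet> w - u \<bullet> unit_vec n k"
    unfolding u_def[of] by (rule scalar_prod_minus_distrib[OF _ w]) (use w in auto)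
  also have "u \<bullet> w = w \<bullet> w - unit_vec n k \<bullet> w"
    unfolding u_def by (rule minus_scalar_prod_distrib) (use w in auto)
  finally have uu: "u \<bullet> u = 2 - 2 * w $ k" using ue ww w k by simp
  show ?thesis
  proof (cases "u \<bullet> u = 0")
    case True
    hence "u = 0\<^sub>v n" by (rule real_sq_eq_0_vec[OF u])
    hence wk: "w = unit_vec n k" unfolding u_def
      by (metis (no_types, lifting) carrier_vecD eq_vecI index_minus_vec(1) index_zero_vec(1) right_minus_eq unit_vec_carrier w)
    have "hhu n u *\<^sub>v unit_vec n k = unit_vec n k - 0 \<cdot>\<^sub>v u"
      using hhu_vec[OF u unit_vec_carrier[of n k]] True by simp
    also have "\<dots> = unit_vec n k" by (rule eq_vecI) (use u in auto)
    finally show ?thesis using wk u_def by simp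
  next
    case False
    have c: "(2 / (u \<bullet> u)) * (u \<bullet> unit_vec n k) = -1"
      using False unfolding ue uu by (simp add: field_simps)
    have "hhu n u *\<^sub>v unit_vec n k = unit_vec n k - (-1) \<cdot>\<^sub>v u"
      using hhu_vec[OF u unit_vec_carrier[of n k]] c by simp
    also have "\<dots> = w" unfolding u_def by (rule eq_vecI) (use w in auto)
    finally show ?thesis unfolding u_def .
  qed
qed

lemma sum_shift_k:
  fixes f :: "nat \<Rightarrow> 'a::comm_monoid_add"
  assumes "k \<le> n"
  shows "(\<Sum>i<n. if i < k then 0 else f (i - k)) = (\<Sum>j<n-k. f j)"
proof -
  obtain m where n: "n = k + m" using assms le_Suc_ex by blast
  have "(\<Sum>i<n. if i < k then 0 else f (i - k)) =
        (\<Sum>i\<in>{0..<k}. if i < k then 0 else f (i - k)) + (\<Sum>i\<in>{k..<k+m}. if i < k then 0 else f (i - k))"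
    unfolding n lessThan_atLeast0 by (rule sum.atLeastLessThan_concat[symmetric]) auto
  also have "(\<Sum>i\<in>{0..<k}. if i < k then 0 else f (i - k)) = 0" by simp
  also have "(\<Sum>i\<in>{k..<k+m}. if i < k then 0 else f (i - k)) = (\<Sum>i\<in>{0+k..<m+k}. if i < k then 0 else f (i - k))"
    by (simp add: add.commute)
  also have "\<dots> = (\<Sum>i\<in>{0..<m}. f i)" by (subst sum.shift_bounds_nat_ivl) simp
  finally show ?thesis by (simp add: n lessThan_atLeast0)
qed

lemma mat_eq_by_units:
  fixes X Y :: "'a::comm_ring_1 mat"
  assumes X: "X \<in> carrier_mat n n" and Y: "Y \<in> carrier_mat n n"
    and eq: "\<And>j. j < n \<Longrightarrow> X *\<^sub>v unit_vec n j = Y *\<^sub>v unit_vec n j"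
  shows "X = Y"
proof (rule eq_matI)
  fix i j assume "i < dim_row Y" "j < dim_col Y"
  hence ij: "i < n" "j < n" using Y by auto
  show "X $$ (i,j) = Y $$ (i,j)"
    using mat_unit_entry[OF X ij] mat_unit_entry[OF Y ij] eq[OF ij(2)] by simp
qed (use X Y in auto)

lemma sym_conj:
  fixes A P :: "'a::comm_ring_1 mat"
  assumes A: "A \<in> carrier_mat n n" "transpose_mat A = A" and P: "P \<in> carrier_mat n n"
  shows "transpose_mat (transpose_mat P * A * P) = transpose_mat P * A * P"
proof -
  have "transpose_mat (transpose_mat P * A * P) = transpose_mat P * transpose_mat (transpose_mat P * A)"
    by (rule transpose_mult[of _ n n _ n]) (use A P in auto)
  also have "transpose_mat (transpose_mat P * A) = transpose_mat A * P"
    using transpose_mult[of "transpose_mat P" n n A n] A P by simp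
  also have "transpose_mat P * (transpose_mat A * P) = transpose_mat P * A * P"
    using A P by (simp add: assoc_mult_mat[of _ n n _ n _ n])
  finally show ?thesis .
qed

lemma sym_entry:
  assumes "transpose_mat B = B" "B \<in> carrier_mat n n" "i < n" "j < n"
  shows "B $$ (i,j) = B $$ (j,i)"
  using assms by (metis carrier_matD(1) carrier_matD(2) index_transpose_mat(1))

lemma spectral_k:
  fixes A :: "real mat"
  assumes A: "A \<in> carrier_mat n n" and symA: "transpose_mat A = A"
  shows "k \<le> n \<Longrightarrow> \<exists>P. P \<in> carrier_mat n n \<and> transpose_mat P * P = 1\<^sub>m n \<and>
     (\<forall>i<n. \<forall>j<n. i \<noteq> j \<and> (i < k \<or> j < k) \<longrightarrow> (transpose_mat P * A * P) $$ (i,j) = 0)"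
proof (induction k)
  case 0
  show ?case by (rule exI[of _ "1\<^sub>m n"]) auto
next
  case (Suc k)
  hence kn: "k < n" by simp
  from Suc obtain P where P: "P \<in> carrier_mat n n" and PP: "transpose_mat P * P = 1\<^sub>m n"
    and Pd: "\<And>i j. i<n \<Longrightarrow> j<n \<Longrightarrow> i \<noteq> j \<Longrightarrow> (i < k \<or> j < k) \<Longrightarrow> (transpose_mat P * A * P) $$ (i,j) = 0"
    by auto
  define B where "B = transpose_mat P * A * P"
  have B: "B \<in> carrier_mat n n" using A P by (simp add: B_def)
  have symB: "transpose_mat B = B" unfolding B_def by (rule sym_conj[OF A symA P])
  have Bd: "\<And>i j. i<n \<Longrightarrow> j<n \<Longrightarrow> i \<noteq> j \<Longrightarrow> (i < k \<or> j < k) \<Longrightarrow> B $$ (i,j) = 0"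
    using Pd by (simp add: B_def)
  define m where "m = n - k"
  have m: "0 < m" using kn by (simp add: m_def)
  define B' where "B' = mat m m (\<lambda>(i,j). B $$ (i+k, j+k))"
  have B': "B' \<in> carrier_mat m m" by (simp add: B'_def)
  have symB': "transpose_mat B' = B'"
    unfolding B'_def by (rule eq_matI) (use sym_entry[OF symB B] m_def in auto)
  obtain e v where v: "v \<in> carrier_vec m" "v \<noteq> 0\<^sub>v m" and ev: "B' *\<^sub>v v = e \<cdot>\<^sub>v v"
    using sym_eigen[OF B' symB' m] by auto
  define nv where "nv = v \<bullet> v"
  have nv0: "nv \<noteq> 0" using real_sq_eq_0_vec[OF v(1)] v(2) by (auto simp: nv_def)
  have nvpos: "0 < nv"
  proof -
    have "0 \<le> nv" unfolding nv_def scalar_prod_def by (intro sum_nonneg) auto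
    thus ?thesis using nv0 by simp
  qed
  define w' where "w' = (1 / sqrt nv) \<cdot>\<^sub>v v"
  have w': "w' \<in> carrier_vec m" using v by (simp add: w'_def)
  have ew': "B' *\<^sub>v w' = e \<cdot>\<^sub>v w'"
    unfolding w'_def using mult_mat_vec[OF B' v(1)] ev
    by (simp add: smult_smult_assoc mult.commute)
  have w'w': "w' \<bullet> w' = 1"
    unfolding w'_def using v(1) nvpos by (simp add: nv_def[symmetric])
  define w where "w = vec n (\<lambda>i. if i < k then 0 else w' $ (i - k))"
  have w: "w \<in> carrier_vec n" by (simp add: w_def)
  have ww: "w \<bullet> w = 1"
  proof -
    have "w \<bullet> w = (\<Sum>i<n. if i < k then 0 else w' $ (i - k) * w' $ (i - k))"
      unfolding w_def scalar_prod_def lessThan_atLeast0 by (intro sum.cong refl) auto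
    also have "\<dots> = (\<Sum>j<m. w' $ j * w' $ j)" unfolding m_def by (rule sum_shift_k) (use kn in simp)
    also have "\<dots> = 1" using w'w' w' by (simp add: scalar_prod_def lessThan_atLeast0)
    finally show ?thesis .
  qed
  have Bw: "B *\<^sub>v w = e \<cdot>\<^sub>v w"
  proof (rule eq_vecI)
    fix i assume "i < dim_vec (e \<cdot>\<^sub>v w)"
    hence i: "i < n" by (simp add: w_def)
    have "(B *\<^sub>v w) $ i = (\<Sum>l<n. B $$ (i,l) * w $ l)"
      using i B w by (simp add: scalar_prod_def lessThan_atLeast0 w_def)
    also have "\<dots> = e * w $ i"
    proof (cases "i < k")
      case True
      have "(\<Sum>l<n. B $$ (i,l) * w $ l) = (\<Sum>l<n. 0)"
        by (intro sum.cong refl) (use True Bd in \<open>auto simp: w_def\<close>)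
      thus ?thesis using True i by (simp add: w_def)
    next
      case False
      have "(\<Sum>l<n. B $$ (i,l) * w $ l) = (\<Sum>l<n. if l < k then 0 else B' $$ (i - k, l - k) * w' $ (l - k))"
        by (intro sum.cong refl) (use False i in \<open>auto simp: w_def B'_def m_def\<close>)
      also have "\<dots> = (\<Sum>j<m. B' $$ (i - k, j) * w' $ j)" unfolding m_def by (rule sum_shift_k) (use kn in simp)
      also have "\<dots> = (B' *\<^sub>v w') $ (i - k)"
        using B' w' False i by (simp add: scalar_prod_def lessThan_atLeast0 m_def)
      also have "\<dots> = e * w $ i" using ew' False i w' by (simp add: w_def m_def)
      finally show ?thesis .
    qed
    finally show "(B *\<^sub>v w) $ i = (e \<cdot>\<^sub>v w) $ i" using i w by simp
  qed (use B w in auto)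
  define u where "u = w - unit_vec n k"
  have u: "u \<in> carrier_vec n" using w by (simp add: u_def)
  define H where "H = hhu n u"
  have H: "H \<in> carrier_mat n n" by (simp add: H_def)
  have Hk: "H *\<^sub>v unit_vec n k = w" unfolding H_def u_def by (rule hh_unit_k[OF w kn ww])
  have Hw: "H *\<^sub>v w = unit_vec n k" using hhu_invol[OF u, of "unit_vec n k"] Hk by (simp add: H_def)
  have Hj: "H *\<^sub>v unit_vec n j = unit_vec n j" if "j < k" for j
    unfolding H_def u_def by (rule hh_unit_other[OF w]) (use that kn in \<open>auto simp: w_def\<close>)
  have HH: "\<And>x. x \<in> carrier_vec n \<Longrightarrow> H *\<^sub>v (H *\<^sub>v x) = x" unfolding H_def by (rule hhu_invol[OF u])
  have HT: "transpose_mat H = H" unfolding H_def by (rule hhu_sym)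
  define P' where "P' = P * H"
  have tP: "transpose_mat P \<in> carrier_mat n n" using P by simp
  have HtP: "H * transpose_mat P \<in> carrier_mat n n" using P H by simp
  have PH: "P * H \<in> carrier_mat n n" using P H by simp
  have HtPA: "H * transpose_mat P * A \<in> carrier_mat n n" using P H A by simp
  have P': "P' \<in> carrier_mat n n" using P H by (simp add: P'_def)
  have tP': "transpose_mat P' = H * transpose_mat P"
    unfolding P'_def using transpose_mult[OF P H] HT by simp
  have P'P': "transpose_mat P' * P' = 1\<^sub>m n"
  proof (rule mat_eq_by_units[of _ n])
    fix j assume j: "j < n"
    have "(transpose_mat P' * P') *\<^sub>v unit_vec n j = H *\<^sub>v ((transpose_mat P * P) *\<^sub>v (H *\<^sub>v unit_vec n j))"
      unfolding tP' unfolding P'_def using P H tP HtP PH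
      by (simp add: assoc_mult_mat_vec[of _ n n _ n] )
    also have "\<dots> = unit_vec n j" unfolding PP using HH[of "unit_vec n j"] H by simp
    finally show "(transpose_mat P' * P') *\<^sub>v unit_vec n j = 1\<^sub>m n *\<^sub>v unit_vec n j" by simp
  qed (use P' in auto)
  define D where "D = transpose_mat P' * A * P'"
  have D: "D \<in> carrier_mat n n" using P' A by (simp add: D_def)
  have symD: "transpose_mat D = D" unfolding D_def by (rule sym_conj[OF A symA P'])
  have Dv: "D *\<^sub>v x = H *\<^sub>v (B *\<^sub>v (H *\<^sub>v x))" if x: "x \<in> carrier_vec n" for x
    unfolding D_def tP' unfolding B_def P'_def using P H A x tP HtP PH HtPA
    by (simp add: assoc_mult_mat_vec[of _ n n _ n])
  have Dcol: "\<exists>\<mu>. D *\<^sub>v unit_vec n j = \<mu> \<cdot>\<^sub>v unit_vec n j" if j: "j < Suc k" for j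
  proof (cases "j < k")
    case True
    have Bj: "B *\<^sub>v unit_vec n j = B $$ (j,j) \<cdot>\<^sub>v unit_vec n j"
    proof (rule eq_vecI)
      fix l assume "l < dim_vec (B $$ (j,j) \<cdot>\<^sub>v unit_vec n j)"
      hence l: "l < n" by simp
      have "(B *\<^sub>v unit_vec n j) $ l = B $$ (l,j)" using mat_unit_entry[OF B l, of j] True kn by simp
      also have "\<dots> = (B $$ (j,j) \<cdot>\<^sub>v unit_vec n j) $ l" using Bd[OF l, of j] True kn l by auto
      finally show "(B *\<^sub>v unit_vec n j) $ l = (B $$ (j,j) \<cdot>\<^sub>v unit_vec n j) $ l" .
    qed (use B in auto)
    have "D *\<^sub>v unit_vec n j = B $$ (j,j) \<cdot>\<^sub>v unit_vec n j"
      unfolding Dv[OF unit_vec_carrier] Hj[OF True] Bj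
      using mult_mat_vec[OF H unit_vec_carrier] Hj[OF True] by simp
    thus ?thesis by blast
  next
    case False
    hence jk: "j = k" using j by simp
    have "D *\<^sub>v unit_vec n j = e \<cdot>\<^sub>v unit_vec n j"
      unfolding Dv[OF unit_vec_carrier] jk Hk Bw
      using mult_mat_vec[OF H w] Hw by simp
    thus ?thesis by blast
  qed
  have Dz: "D $$ (i,j) = 0" if ij: "i < n" "j < n" "i \<noteq> j" "j < Suc k" for i j
  proof -
    obtain \<mu> where "D *\<^sub>v unit_vec n j = \<mu> \<cdot>\<^sub>v unit_vec n j" using Dcol[OF ij(4)] by blast
    thus ?thesis using mat_unit_entry[OF D ij(1,2)] ij by simp
  qed
  show ?case
  proof (intro exI[of _ P'] conjI allI impI)
    fix i j assume ij: "i < n" "j < n" "i \<noteq> j \<and> (i < Suc k \<or> j < Suc k)"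
    show "(transpose_mat P' * A * P') $$ (i,j) = 0"
    proof (cases "j < Suc k")
      case True thus ?thesis using Dz ij by (simp add: D_def)
    next
      case False
      hence "i < Suc k" using ij by simp
      hence "D $$ (j,i) = 0" using Dz ij by simp
      thus ?thesis using sym_entry[OF symD D ij(1,2)] by (simp add: D_def)
    qed
  qed (use P' P'P' in auto)
qed

lemma proots_linear_prod: "proots (\<Prod>a\<leftarrow>as. [:- a, 1:]) = mset (as :: real list)"
proof (induction as)
  case Nil thus ?case by simp
next
  case (Cons a as)
  have "proots (\<Prod>a\<leftarrow>a # as. [:- a, 1:]) = proots ([:- a, 1:] * (\<Prod>a\<leftarrow>as. [:- a, 1:]))" by simp
  also have "\<dots> = proots [:- a, 1:] + proots (\<Prod>a\<leftarrow>as. [:- a, 1:])"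
    by (rule proots_mult) (auto simp: prod_list_zero_iff)
  finally show ?case using Cons by simp
qed

lemma trace_norm_sym:
  fixes A :: "real mat"
  assumes A: "A \<in> carrier_mat n n" and symA: "transpose_mat A = A"
  shows "\<exists>P. P \<in> carrier_mat n n \<and> transpose_mat P * P = 1\<^sub>m n \<and>
    trace_norm A = (\<Sum>i<n. \<bar>(transpose_mat P * A * P) $$ (i,i)\<bar>)"
proof -
  obtain P where P: "P \<in> carrier_mat n n" and PP: "transpose_mat P * P = 1\<^sub>m n"
    and Pd: "\<And>i j. i<n \<Longrightarrow> j<n \<Longrightarrow> i \<noteq> j \<Longrightarrow> (transpose_mat P * A * P) $$ (i,j) = 0"
    using spectral_k[OF A symA, of n] by auto
  have tP: "transpose_mat P \<in> carrier_mat n n" using P by simp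
  have PP': "P * transpose_mat P = 1\<^sub>m n" by (rule mat_mult_left_right_inverse[OF tP P PP])
  define D where "D = transpose_mat P * A * P"
  have D: "D \<in> carrier_mat n n" using P A by (simp add: D_def)
  have AD: "A = P * D * transpose_mat P"
  proof -
    have "P * D * transpose_mat P = (P * transpose_mat P) * A * (P * transpose_mat P)"
      unfolding D_def using P A tP by (simp add: assoc_mult_mat[of _ n n _ n _ n])
    thus ?thesis unfolding PP' using A by simp
  qed
  have AA: "transpose_mat A * A = P * (D * D) * transpose_mat P"
  proof -
    have "transpose_mat A * A = (P * D * transpose_mat P) * (P * D * transpose_mat P)"
      using symA AD by simp
    also have "\<dots> = P * D * (transpose_mat P * P) * D * transpose_mat P"
      using P D tP by (simp add: assoc_mult_mat[of _ n n _ n _ n])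
    also have "\<dots> = P * (D * D) * transpose_mat P"
      unfolding PP using P D tP by (simp add: assoc_mult_mat[of _ n n _ n _ n])
    finally show ?thesis .
  qed
  have DD: "(D * D) $$ (i,j) = (if i = j then (D $$ (i,i))^2 else 0)" if ij: "i < n" "j < n" for i j
  proof -
    have "(D * D) $$ (i,j) = (\<Sum>l\<in>{0..<n}. D $$ (i,l) * D $$ (l,j))"
      using D ij by (simp add: scalar_prod_def)
    also have "\<dots> = (\<Sum>l\<in>{0..<n}. if l = i then D $$ (i,i) * D $$ (i,j) else 0)"
      by (intro sum.cong refl) (use Pd ij in \<open>auto simp: D_def\<close>)
    also have "\<dots> = D $$ (i,i) * D $$ (i,j)" using ij by simp
    finally show ?thesis using Pd ij by (auto simp: D_def power2_eq_square)
  qed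
  have DDc: "D * D \<in> carrier_mat n n" using D by simp
  have ut: "upper_triangular (D * D)" unfolding upper_triangular_def using DD DDc by auto
  have sim: "similar_mat (transpose_mat A * A) (D * D)"
    unfolding similar_mat_def similar_mat_wit_def
    by (rule exI[of _ P], rule exI[of _ "transpose_mat P"]) (use A P tP D PP PP' AA in \<open>auto simp: Let_def\<close>)
  have "char_poly (transpose_mat A * A) = (\<Prod>a\<leftarrow>diag_mat (D * D). [:- a, 1:])"
    using char_poly_similar[OF sim] char_poly_upper_triangular[OF DDc ut] by simp
  hence "proots (char_poly (transpose_mat A * A)) = mset (diag_mat (D * D))"
    by (simp add: proots_linear_prod)
  hence "trace_norm A = sum_list (map sqrt (diag_mat (D * D)))"
    unfolding trace_norm_def by (metis mset_map sum_mset_sum_list)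
  also have "\<dots> = (\<Sum>i\<in>{0..<n}. sqrt ((D * D) $$ (i,i)))"
    unfolding diag_mat_def using DDc D by (simp add: sum_set_upt_conv_sum_list_nat[symmetric] comp_def)
  also have "\<dots> = (\<Sum>i<n. \<bar>D $$ (i,i)\<bar>)"
    unfolding lessThan_atLeast0 by (intro sum.cong refl) (simp add: DD)
  finally show ?thesis using P PP by (auto simp: D_def)
qed

definition bf :: "nat \<Rightarrow> real mat \<Rightarrow> (nat \<Rightarrow> real) \<Rightarrow> (nat \<Rightarrow> real) \<Rightarrow> real" where
  "bf n R x y = (\<Sum>k<n. \<Sum>l<n. x k * R $$ (k,l) * y l)"

lemma bf_sym:
  assumes R: "R \<in> carrier_mat n n" "transpose_mat R = R"
  shows "bf n R x y = bf n R y x"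
proof -
  have "bf n R x y = (\<Sum>l<n. \<Sum>k<n. x k * R $$ (k,l) * y l)" unfolding bf_def by (rule sum.swap)
  also have "\<dots> = bf n R y x" unfolding bf_def
  proof (intro sum.cong refl)
    fix l k assume "l \<in> {..<n}" "k \<in> {..<n}"
    hence "R $$ (k,l) = R $$ (l,k)" using R by (metis carrier_matD(1) carrier_matD(2) index_transpose_mat(1) lessThan_iff)
    thus "x k * R $$ (k,l) * y l = y l * R $$ (l,k) * x k" by simp
  qed
  finally show ?thesis .
qed

lemma bf_nonneg:
  assumes "psd_mat n R"
  shows "0 \<le> bf n R x x"
proof -
  have R: "R \<in> carrier_mat n n" using assms by (simp add: psd_mat_def)
  have "0 \<le> vec n x \<bullet> (R *\<^sub>v vec n x)" using assms by (simp add: psd_mat_def)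
  also have "vec n x \<bullet> (R *\<^sub>v vec n x) = bf n R x x"
    unfolding bf_def using R by (simp add: scalar_prod_def lessThan_atLeast0 sum_distrib_left mult.assoc)
  finally show ?thesis .
qed

lemma bf_expand:
  "bf n R (\<lambda>k. a * x k + b * y k) (\<lambda>k. a * x k + b * y k)
   = a^2 * bf n R x x + a * b * bf n R x y + a * b * bf n R y x + b^2 * bf n R y y"
proof -
  have "bf n R (\<lambda>k. a * x k + b * y k) (\<lambda>k. a * x k + b * y k) =
     (\<Sum>k<n. \<Sum>l<n. a^2 * (x k * R $$ (k,l) * x l) + a * b * (x k * R $$ (k,l) * y l)
        + a * b * (y k * R $$ (k,l) * x l) + b^2 * (y k * R $$ (k,l) * y l))"
    unfolding bf_def by (intro sum.cong refl) (simp add: algebra_simps power2_eq_square)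
  also have "\<dots> = a^2 * bf n R x x + a * b * bf n R x y + a * b * bf n R y x + b^2 * bf n R y y"
    unfolding bf_def by (simp add: sum.distrib sum_distrib_left)
  finally show ?thesis .
qed

lemma bf_amgm:
  assumes psd: "psd_mat n R" and t: "0 < t"
  shows "\<bar>bf n R x y\<bar> \<le> (t * bf n R x x + bf n R y y / t) / 2"
proof -
  have R: "R \<in> carrier_mat n n" "transpose_mat R = R" using psd by (auto simp: psd_mat_def)
  have s: "bf n R y x = bf n R x y" using bf_sym[OF R] by simp
  have p1: "0 \<le> t^2 * bf n R x x + 2 * t * bf n R x y + bf n R y y"
    using bf_nonneg[OF psd, of "\<lambda>k. t * x k + 1 * y k"] unfolding bf_expand s by simp
  have p2: "0 \<le> t^2 * bf n R x x - 2 * t * bf n R x y + bf n R y y"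
    using bf_nonneg[OF psd, of "\<lambda>k. t * x k + (-1) * y k"] unfolding bf_expand s by simp
  have h: "2 * t * \<bar>bf n R x y\<bar> \<le> t^2 * bf n R x x + bf n R y y"
    using p1 p2 by (cases "bf n R x y \<ge> 0") auto
  have "\<bar>bf n R x y\<bar> \<le> (t^2 * bf n R x x + bf n R y y) / (2 * t)"
    using h t by (simp add: pos_le_divide_eq mult.commute)
  also have "\<dots> = (t * bf n R x x + bf n R y y / t) / 2"
    using t by (simp add: field_simps power2_eq_square)
  finally show ?thesis .
qed

lemma bf_sum:
  assumes P: "P \<in> carrier_mat n n" and PP: "P * transpose_mat P = 1\<^sub>m n"
  shows "(\<Sum>i<n. bf n R (\<lambda>k. a k * P $$ (k,i)) (\<lambda>l. b l * P $$ (l,i))) = (\<Sum>k<n. a k * b k * R $$ (k,k))"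
proof -
  have PPe: "(\<Sum>i<n. P $$ (k,i) * P $$ (l,i)) = (if k = l then 1 else 0)" if "k < n" "l < n" for k l
  proof -
    have "(P * transpose_mat P) $$ (k,l) = (\<Sum>i<n. P $$ (k,i) * P $$ (l,i))"
      using P that by (simp add: scalar_prod_def lessThan_atLeast0)
    thus ?thesis using PP that by simp
  qed
  have "(\<Sum>i<n. bf n R (\<lambda>k. a k * P $$ (k,i)) (\<lambda>l. b l * P $$ (l,i)))
      = (\<Sum>i<n. \<Sum>k<n. \<Sum>l<n. (a k * R $$ (k,l) * b l) * (P $$ (k,i) * P $$ (l,i)))"
    unfolding bf_def by (intro sum.cong refl) (simp add: algebra_simps)
  also have "\<dots> = (\<Sum>k<n. \<Sum>i<n. \<Sum>l<n. (a k * R $$ (k,l) * b l) * (P $$ (k,i) * P $$ (l,i)))"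
    by (rule sum.swap)
  also have "\<dots> = (\<Sum>k<n. \<Sum>l<n. \<Sum>i<n. (a k * R $$ (k,l) * b l) * (P $$ (k,i) * P $$ (l,i)))"
    by (rule sum.cong[OF refl], rule sum.swap)
  also have "\<dots> = (\<Sum>k<n. \<Sum>l<n. (a k * R $$ (k,l) * b l) * (if k = l then 1 else 0))"
    by (intro sum.cong refl) (simp add: sum_distrib_left[symmetric] PPe)
  also have "\<dots> = (\<Sum>k<n. a k * b k * R $$ (k,k))"
    by (intro sum.cong refl) (simp add: if_distrib cong: if_cong)
  finally show ?thesis .
qed

lemma quad_entry:
  fixes X P :: "real mat"
  assumes X: "X \<in> carrier_mat n n" and P: "P \<in> carrier_mat n n" and i: "i < n" "j < n"
  shows "(transpose_mat P * X * P) $$ (i,j) = (\<Sum>k<n. \<Sum>l<n. P $$ (k,i) * X $$ (k,l) * P $$ (l,j))"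
proof -
  have "(transpose_mat P * X * P) $$ (i,j) = (\<Sum>k<n. P $$ (k,i) * (\<Sum>l<n. X $$ (k,l) * P $$ (l,j)))"
    using X P i by (simp add: scalar_prod_def lessThan_atLeast0)
  also have "\<dots> = (\<Sum>k<n. \<Sum>l<n. P $$ (k,i) * X $$ (k,l) * P $$ (l,j))"
    by (simp add: sum_distrib_left mult.assoc)
  finally show ?thesis .
qed

lemma sq_sqrt_diff:
  assumes "0 \<le> a" "0 \<le> b"
  shows "(sqrt a - sqrt b)^2 \<le> \<bar>a - b\<bar>"
proof -
  have "a - b = (sqrt a - sqrt b) * (sqrt a + sqrt b)"
    using assms by (simp add: algebra_simps)
  hence "\<bar>a - b\<bar> = \<bar>sqrt a - sqrt b\<bar> * (sqrt a + sqrt b)"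
    using assms by (simp add: abs_mult)
  moreover have "\<bar>sqrt a - sqrt b\<bar> \<le> sqrt a + sqrt b"
    using real_sqrt_ge_zero[OF assms(1)] real_sqrt_ge_zero[OF assms(2)] by linarith
  ultimately show ?thesis
    by (metis abs_ge_zero mult_left_mono power2_abs power2_eq_square)
qed


theorem lemma6:
  shows "\<exists>K::real. \<forall>(n::nat) (\<xi>::real) (\<rho>::real mat).
    0 \<le> \<xi> \<and> \<xi> \<le> 1/2 \<and> psd_mat n \<rho> \<and> mat_trace \<rho> = 1 \<and>
    (\<forall>i<n. \<rho> $$ (i, i) > 0) \<and>
    (\<Sum>i<n. \<bar>\<rho> $$ (i, i) - 1 / real n\<bar>) \<le> \<xi> ^ 3
    \<longrightarrow> trace_norm (\<rho> - mat n n (\<lambda>(i, j). \<rho> $$ (i, j) / (real n * sqrt (\<rho> $$ (i, i) * \<rho> $$ (j, j)))))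
        \<le> K * \<xi>"
proof (intro exI[of _ 2] allI impI)
  fix n :: nat and \<xi> :: real and \<rho> :: "real mat"
  assume H: "0 \<le> \<xi> \<and> \<xi> \<le> 1/2 \<and> psd_mat n \<rho> \<and> mat_trace \<rho> = 1 \<and>
    (\<forall>i<n. \<rho> $$ (i, i) > 0) \<and>
    (\<Sum>i<n. \<bar>\<rho> $$ (i, i) - 1 / real n\<bar>) \<le> \<xi> ^ 3"
  hence xi0: "0 \<le> \<xi>" and xi1: "\<xi> \<le> 1/2" and psd: "psd_mat n \<rho>" and tr: "mat_trace \<rho> = 1"
    and dpos: "\<And>i. i < n \<Longrightarrow> \<rho> $$ (i, i) > 0"
    and dev: "(\<Sum>i<n. \<bar>\<rho> $$ (i, i) - 1 / real n\<bar>) \<le> \<xi> ^ 3" by auto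
  have R: "\<rho> \<in> carrier_mat n n" and symR: "transpose_mat \<rho> = \<rho>" using psd by (auto simp: psd_mat_def)
  define d where "d k = \<rho> $$ (k,k)" for k
  have trd: "(\<Sum>k<n. d k) = 1" using tr R by (simp add: mat_trace_def d_def)
  have n0: "0 < n" using trd by (cases n) auto
  define c where "c k = 1 / sqrt (real n * d k)" for k
  define e where "e k = 1 - c k" for k
  define S where "S = mat n n (\<lambda>(i, j). \<rho> $$ (i, j) / (real n * sqrt (\<rho> $$ (i, i) * \<rho> $$ (j, j))))"
  define M where "M = \<rho> - S"
  have M: "M \<in> carrier_mat n n" unfolding M_def S_def by (rule minus_carrier_mat) simp
  have Mkl: "M $$ (k,l) = \<rho> $$ (k,l) * (1 - c k * c l)" if kl: "k < n" "l < n" for k l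
  proof -
    have dk: "0 < d k" "0 < d l" using dpos kl by (auto simp: d_def)
    have "sqrt (real n * d k) * sqrt (real n * d l) = real n * sqrt (d k * d l)"
      using n0 dk by (simp add: real_sqrt_mult)
    hence ckcl: "c k * c l = 1 / (real n * sqrt (d k * d l))" by (simp add: c_def)
    have "M $$ (k,l) = \<rho> $$ (k,l) - \<rho> $$ (k,l) / (real n * sqrt (d k * d l))"
      using kl R by (simp add: M_def S_def d_def)
    also have "\<dots> = \<rho> $$ (k,l) * (1 - c k * c l)" unfolding ckcl by (simp add: right_diff_distrib)
    finally show ?thesis .
  qed
  have symM: "transpose_mat M = M"
  proof (rule eq_matI)
    fix i j assume "i < dim_row M" "j < dim_col M"
    hence ij: "i < n" "j < n" using M by auto
    have "transpose_mat M $$ (i,j) = M $$ (j,i)" using ij M by simp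
    also have "\<dots> = M $$ (i,j)"
      by (simp only: Mkl[OF ij(2,1)] Mkl[OF ij] sym_entry[OF symR R ij(2,1)] mult.commute[of "c j" "c i"])
    finally show "transpose_mat M $$ (i,j) = M $$ (i,j)" .
  qed (use M in auto)
  obtain P where P: "P \<in> carrier_mat n n" and PP: "transpose_mat P * P = 1\<^sub>m n"
    and tn: "trace_norm M = (\<Sum>i<n. \<bar>(transpose_mat P * M * P) $$ (i,i)\<bar>)"
    using trace_norm_sym[OF M symM] by blast
  have PP': "P * transpose_mat P = 1\<^sub>m n" using mat_mult_left_right_inverse[of "transpose_mat P" n P] P PP by simp
  define q where "q i k = P $$ (k,i)" for i k
  define Xi where "Xi i = bf n \<rho> (\<lambda>k. e k * q i k) (\<lambda>k. e k * q i k)" for i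
  define Qi where "Qi i = bf n \<rho> (\<lambda>k. 1 * q i k) (\<lambda>k. 1 * q i k)" for i
  define Ci where "Ci i = bf n \<rho> (\<lambda>k. c k * q i k) (\<lambda>k. c k * q i k)" for i
  have Dii: "(transpose_mat P * M * P) $$ (i,i) = bf n \<rho> (\<lambda>k. e k * q i k) (\<lambda>k. 1 * q i k)
      + bf n \<rho> (\<lambda>k. e k * q i k) (\<lambda>k. c k * q i k)" if i: "i < n" for i
  proof -
    have "(transpose_mat P * M * P) $$ (i,i) = (\<Sum>k<n. \<Sum>l<n. P $$ (k,i) * M $$ (k,l) * P $$ (l,i))"
      by (rule quad_entry[OF M P i i])
    also have "\<dots> = (\<Sum>k<n. \<Sum>l<n. (e k * q i k) * \<rho> $$ (k,l) * (1 * q i l)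
        + (c k * q i k) * \<rho> $$ (k,l) * (e l * q i l))"
    proof (intro sum.cong refl)
      fix k l assume "k \<in> {..<n}" "l \<in> {..<n}"
      hence kl: "k < n" "l < n" by auto
      show "P $$ (k,i) * M $$ (k,l) * P $$ (l,i) = (e k * q i k) * \<rho> $$ (k,l) * (1 * q i l)
        + (c k * q i k) * \<rho> $$ (k,l) * (e l * q i l)"
        unfolding Mkl[OF kl] q_def e_def by (simp add: algebra_simps)
    qed
    also have "\<dots> = bf n \<rho> (\<lambda>k. e k * q i k) (\<lambda>k. 1 * q i k)
      + bf n \<rho> (\<lambda>k. c k * q i k) (\<lambda>k. e k * q i k)"
      by (simp only: bf_def sum.distrib)
    also have "bf n \<rho> (\<lambda>k. c k * q i k) (\<lambda>k. e k * q i k) = bf n \<rho> (\<lambda>k. e k * q i k) (\<lambda>k. c k * q i k)"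
      by (rule bf_sym[OF R symR])
    finally show ?thesis .
  qed
  define X where "X = (\<Sum>k<n. e k * e k * d k)"
  have sumX: "(\<Sum>i<n. Xi i) = X"
    unfolding Xi_def q_def X_def d_def by (rule bf_sum[OF P PP'])
  have sum1: "(\<Sum>i<n. Qi i) = 1"
  proof -
    have "(\<Sum>i<n. Qi i) = (\<Sum>k<n. 1 * 1 * \<rho> $$ (k,k))"
      unfolding Qi_def q_def by (rule bf_sum[OF P PP'])
    thus ?thesis using trd by (simp add: d_def)
  qed
  have sumc: "(\<Sum>i<n. Ci i) = 1"
  proof -
    have "(\<Sum>i<n. Ci i) = (\<Sum>k<n. c k * c k * d k)"
      unfolding Ci_def q_def d_def by (rule bf_sum[OF P PP'])
    also have "\<dots> = (\<Sum>k<n. 1 / real n)"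
    proof (intro sum.cong refl)
      fix k assume "k \<in> {..<n}"
      hence dk: "0 < d k" using dpos by (simp add: d_def)
      have "c k * c k = 1 / (real n * d k)" using dk n0 by (simp add: c_def)
      thus "c k * c k * d k = 1 / real n" using dk by simp
    qed
    also have "\<dots> = 1" using n0 by simp
    finally show ?thesis .
  qed
  have bound: "trace_norm M \<le> t * X + 1 / t" if t: "0 < t" for t
  proof -
    have "trace_norm M \<le> (\<Sum>i<n. (t * Xi i + Qi i / t) / 2 + (t * Xi i + Ci i / t) / 2)"
      unfolding tn
    proof (intro sum_mono)
      fix i assume "i \<in> {..<n}"
      hence i: "i < n" by simp
      have a1: "\<bar>bf n \<rho> (\<lambda>k. e k * q i k) (\<lambda>k. 1 * q i k)\<bar> \<le> (t * Xi i + Qi i / t) / 2"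
        unfolding Xi_def Qi_def by (rule bf_amgm[OF psd t])
      have a2: "\<bar>bf n \<rho> (\<lambda>k. e k * q i k) (\<lambda>k. c k * q i k)\<bar> \<le> (t * Xi i + Ci i / t) / 2"
        unfolding Xi_def Ci_def by (rule bf_amgm[OF psd t])
      have a3: "\<bar>bf n \<rho> (\<lambda>k. e k * q i k) (\<lambda>k. 1 * q i k) + bf n \<rho> (\<lambda>k. e k * q i k) (\<lambda>k. c k * q i k)\<bar>
        \<le> \<bar>bf n \<rho> (\<lambda>k. e k * q i k) (\<lambda>k. 1 * q i k)\<bar> + \<bar>bf n \<rho> (\<lambda>k. e k * q i k) (\<lambda>k. c k * q i k)\<bar>"
        by (rule abs_triangle_ineq)
      show "\<bar>(transpose_mat P * M * P) $$ (i,i)\<bar> \<le> (t * Xi i + Qi i / t) / 2 + (t * Xi i + Ci i / t) / 2"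
        unfolding Dii[OF i] using a1 a2 a3 by linarith
    qed
    also have "\<dots> = (\<Sum>i<n. t * Xi i + (Qi i + Ci i) / (2 * t))"
      by (intro sum.cong refl) (use t in \<open>simp add: field_simps\<close>)
    also have "\<dots> = t * (\<Sum>i<n. Xi i) + ((\<Sum>i<n. Qi i) + (\<Sum>i<n. Ci i)) / (2 * t)"
      by (simp add: sum.distrib sum_distrib_left flip: sum_divide_distrib)
    also have "\<dots> = t * X + 1 / t" unfolding sumX sum1 sumc using t by simp
    finally show ?thesis .
  qed
  have Xle: "X \<le> \<xi> ^ 3"
  proof -
    have "X \<le> (\<Sum>k<n. \<bar>\<rho> $$ (k, k) - 1 / real n\<bar>)"
      unfolding X_def
    proof (intro sum_mono)
      fix k assume "k \<in> {..<n}"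
      hence dk: "0 < d k" using dpos by (simp add: d_def)
      have s1: "sqrt (real n * d k) = sqrt (real n) * sqrt (d k)" by (simp add: real_sqrt_mult)
      have s2: "0 < sqrt (d k)" "0 < sqrt (real n)" using dk n0 by auto
      have s3: "sqrt (1 / real n) = 1 / sqrt (real n)" by (simp add: real_sqrt_divide)
      have ek: "e k * sqrt (d k) = sqrt (d k) - sqrt (1 / real n)"
        unfolding e_def c_def s1 s3 using s2 by (simp add: field_simps)
      have "(e k * sqrt (d k))^2 = (e k)^2 * (sqrt (d k))^2" by (rule power_mult_distrib)
      also have "(sqrt (d k))^2 = d k" using dk by simp
      finally have "e k * e k * d k = (sqrt (d k) - sqrt (1 / real n))^2"
        unfolding ek by (simp add: power2_eq_square)
      also have "\<dots> \<le> \<bar>d k - 1 / real n\<bar>" by (rule sq_sqrt_diff) (use dk in auto)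
      finally show "e k * e k * d k \<le> \<bar>\<rho> $$ (k, k) - 1 / real n\<bar>" by (simp add: d_def)
    qed
    thus ?thesis using dev by simp
  qed
  have X0: "0 \<le> X" unfolding X_def
  proof (intro sum_nonneg)
    fix k assume "k \<in> {..<n}"
    hence "0 < d k" using dpos by (simp add: d_def)
    thus "0 \<le> e k * e k * d k" by (intro mult_nonneg_nonneg[OF zero_le_square]) simp
  qed
  have "trace_norm M \<le> 2 * \<xi>"
  proof (cases "\<xi> = 0")
    case True
    hence X0': "X = 0" using Xle X0 by simp
    show ?thesis
    proof (rule ccontr)
      assume "\<not> trace_norm M \<le> 2 * \<xi>"
      hence pos: "0 < trace_norm M" using True by simp
      have "trace_norm M \<le> 2 / trace_norm M * X + 1 / (2 / trace_norm M)"
        by (rule bound) (use pos in simp)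
      hence "trace_norm M \<le> trace_norm M / 2" using X0' by simp
      thus False using pos by simp
    qed
  next
    case False
    hence xp: "0 < \<xi>" using xi0 by simp
    have "trace_norm M \<le> (1/\<xi>) * X + 1 / (1/\<xi>)" by (rule bound) (use xp in simp)
    also have "\<dots> \<le> (1/\<xi>) * \<xi>^3 + \<xi>"
      using mult_left_mono[OF Xle, of "1/\<xi>"] xp by simp
    also have "(1/\<xi>) * \<xi>^3 = \<xi>^2" using xp by (simp add: power3_eq_cube power2_eq_square)
    also have "\<xi>^2 \<le> \<xi> / 2" using mult_right_mono[OF xi1, of \<xi>] xp by (simp add: power2_eq_square)
    finally show ?thesis using xp by linarith
  qed
  thus "trace_norm (\<rho> - mat n n (\<lambda>(i, j). \<rho> $$ (i, j) / (real n * sqrt (\<rho> $$ (i, i) * \<rho> $$ (j, j)))))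
        \<le> 2 * \<xi>" by (simp add: M_def S_def)
qed

end
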